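(* Let $\mathcal{N}$ be a 2-step nilpotent Lie algebra over $\mathbb{R}$ whose commutator ideal $\mathcal{Z}=[\mathcal{N},\mathcal{N}]$ coincides with its center, and let $\mathcal{V}$ be a subspace with $\mathcal{N}=\mathcal{V}\oplus\mathcal{Z}$. Let $q\ge2$ and assume there is an $\mathbb{R}$-basis $Y_1,\dots,Y_q$ of $\mathcal{V}$ such that $\{[Y_1,Y_j]: j=2,\dots,q\}$ is linearly independent. Let $f:\mathcal{N}\to\mathcal{N}$ be a Lie ring homomorphism with $f(\mathcal{V})\subseteq\mathcal{V}$. Then: (A) if $f$ is a Lie ring automorphism and $f(\mathcal{V})=\mathcal{V}$, then $f$ is a Lie algebra automorphism; (B) if there is an $\mathbb{R}$-basis $X_1,\dots,X_q$ of $\mathcal{V}$ with $f(X_1)=Y_1$ and $f([X_1,X_j])\neq0$ for all $j=2,\dots,q$, then $f$ is a Lie algebra homomorphism. In particular, $\mathcal{N}$ satisfies the partial automatic continuity, and for every Lie ring automorphism $f$ of $\mathcal{N}$ there exist a central automorphism $\mu$ and a Lie algebra automorphism $\overline{f}$ of $\mathcal{N}$ such that $f=\mu\circ\overline{f}$.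
   Context: A Lie ring homomorphism between real Lie algebras is an additive map preserving the Lie bracket (not assumed $\mathbb{R}$-linear); a Lie ring automorphism is a bijective Lie ring homomorphism of a Lie algebra onto itself. A Lie algebra homomorphism/automorphism is an $\mathbb{R}$-linear one. A central automorphism of a Lie algebra $\mathcal{N}$ with center $\mathfrak{z}$ is a Lie ring automorphism $f$ with $f(x)-x\in\mathfrak{z}$ for all $x$. Field automorphisms of $\mathcal{N}$: if $\mathcal{N}=\mathcal{N}_1\oplus\cdots\oplus\mathcal{N}_k$ (ideals), for each $\mathcal{N}_i$ that is the realification of a complex Lie algebra choose a $\mathbb{C}$-basis $e_1,\dots,e_m$ and a field automorphism $\varphi$ of $\mathbb{C}$ fixing the structure constants and set $\sigma_i(\sum x_le_l)=\sum\varphi(x_l)e_l$, otherwise $\sigma_i=\mathrm{id}$; $\sigma_1\times\cdots\times\sigma_k$ is a field automorphism. $\mathcal{N}$ satisfies the partial automatic continuity if every Lie ring automorphism is a composition $\mu\circ\overline{f}\circ\sigma$ of a central automorphism, a Lie algebra automorphism and a field automorphism. *)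

theory Defs
  imports "HOL-Analysis.Analysis"
begin

definition lie_algebra :: "('a::real_vector \<Rightarrow> 'a \<Rightarrow> 'a) \<Rightarrow> bool" where
  "lie_algebra br \<longleftrightarrow>
     (\<forall>x. linear (br x)) \<and> (\<forall>y. linear (\<lambda>x. br x y)) \<and>
     (\<forall>x. br x x = 0) \<and>
     (\<forall>x y z. br x (br y z) + br y (br z x) + br z (br x y) = 0)"

definition center :: "('a::real_vector \<Rightarrow> 'a \<Rightarrow> 'a) \<Rightarrow> 'a set" where
  "center br = {z. \<forall>x. br z x = 0}"

definition derived :: "('a::real_vector \<Rightarrow> 'a \<Rightarrow> 'a) \<Rightarrow> 'a set" where
  "derived br = span {br x y | x y. True}"

definition two_step_nilpotent :: "('a::real_vector \<Rightarrow> 'a \<Rightarrow> 'a) \<Rightarrow> bool" where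
  "two_step_nilpotent br \<longleftrightarrow>
     (\<forall>x y z. br x (br y z) = 0) \<and> (\<exists>x y. br x y \<noteq> 0)"

definition lie_ring_hom :: "('a::real_vector \<Rightarrow> 'a \<Rightarrow> 'a) \<Rightarrow> ('a \<Rightarrow> 'a) \<Rightarrow> bool" where
  "lie_ring_hom br f \<longleftrightarrow>
     (\<forall>x y. f (x + y) = f x + f y) \<and> (\<forall>x y. f (br x y) = br (f x) (f y))"

definition lie_ring_aut :: "('a::real_vector \<Rightarrow> 'a \<Rightarrow> 'a) \<Rightarrow> ('a \<Rightarrow> 'a) \<Rightarrow> bool" where
  "lie_ring_aut br f \<longleftrightarrow> lie_ring_hom br f \<and> bij f"

definition lie_alg_hom :: "('a::real_vector \<Rightarrow> 'a \<Rightarrow> 'a) \<Rightarrow> ('a \<Rightarrow> 'a) \<Rightarrow> bool" where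
  "lie_alg_hom br f \<longleftrightarrow> lie_ring_hom br f \<and> linear f"

definition lie_alg_aut :: "('a::real_vector \<Rightarrow> 'a \<Rightarrow> 'a) \<Rightarrow> ('a \<Rightarrow> 'a) \<Rightarrow> bool" where
  "lie_alg_aut br f \<longleftrightarrow> lie_alg_hom br f \<and> bij f"

definition central_aut :: "('a::real_vector \<Rightarrow> 'a \<Rightarrow> 'a) \<Rightarrow> ('a \<Rightarrow> 'a) \<Rightarrow> bool" where
  "central_aut br f \<longleftrightarrow> lie_ring_aut br f \<and> (\<forall>x. f x - x \<in> center br)"

definition is_basis_of :: "'a::real_vector set \<Rightarrow> (nat \<Rightarrow> 'a) \<Rightarrow> nat \<Rightarrow> nat \<Rightarrow> bool" where
  "is_basis_of V Y lo hi \<longleftrightarrow>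
     inj_on Y {lo..hi} \<and> independent (Y ` {lo..hi}) \<and> span (Y ` {lo..hi}) = V"

end

theory Submission
  imports Defs
begin
lemma real_hom_id:
  fixes a :: "real \<Rightarrow> real"
  assumes add: "\<And>s t. a (s+t) = a s + a t" and mul: "\<And>s t. a (s*t) = a s * a t"
    and one: "a 1 = 1"
  shows "a x = x"
proof -
  have a0: "a 0 = 0" using add[of 0 0] by simp
  have aneg: "a (- s) = - a s" for s using add[of s "-s"] a0 by simp
  have anat: "a (of_nat n) = of_nat n" for n
    by (induction n) (simp_all add: a0 add one)
  have aint: "a (of_int m) = of_int m" for m
  proof (cases "m \<ge> 0")
    case True then show ?thesis using anat[of "nat m"] by simp
  next
    case False then show ?thesis using anat[of "nat (-m)"] aneg[of "of_nat (nat (-m))"] by simp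
  qed
  have arat: "a r = r" if "r \<in> \<rat>" for r
  proof -
    from that obtain m n where n: "0 < n" and r: "r = of_int m / of_int n" by (rule Rats_cases')
    have "a (of_int n * r) = of_int m" using n r aint by simp
    hence "of_int n * a r = of_int m" using mul aint by simp
    hence "a r = of_int m / of_int n" using n by (simp add: field_simps)
    thus ?thesis using r by simp
  qed
  have apos: "a s \<ge> 0" if "s \<ge> 0" for s
  proof -
    have "s = sqrt s * sqrt s" using that by simp
    hence "a s = a (sqrt s) * a (sqrt s)" using mul by metis
    thus ?thesis by simp
  qed
  have amono: "a s \<le> a t" if "s \<le> t" for s t
    using add[of s "t - s"] apos[of "t - s"] that by simp
  show ?thesis
  proof (rule ccontr)
    assume "a x \<noteq> x"
    hence "a x < x \<or> x < a x" by linarith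
    thus False
    proof
      assume "a x < x"
      then obtain r where "r \<in> \<rat>" "a x < r" "r < x" using Rats_dense_in_real by blast
      thus False using amono[of r x] arat by force
    next
      assume "x < a x"
      then obtain r where "r \<in> \<rat>" "x < r" "r < a x" using Rats_dense_in_real by blast
      thus False using amono[of x r] arat by force
    qed
  qed
qed

lemma additive_of_hom: "lie_ring_hom br f \<Longrightarrow> Modules.additive f"
  by (simp add: lie_ring_hom_def Modules.additive_def)

locale nsetup =
  fixes br :: "'a::real_vector \<Rightarrow> 'a \<Rightarrow> 'a"
    and V :: "'a set" and q :: nat and Y :: "nat \<Rightarrow> 'a"
  assumes lie: "lie_algebra br"
    and zc: "derived br = center br"
    and subV: "subspace V"
    and dsum1: "V \<inter> center br = {0}"
    and dsum2: "{v + z | v z. v \<in> V \<and> z \<in> center br} = UNIV"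
    and q2: "q \<ge> 2"
    and Ybasis: "is_basis_of V Y 1 q"
    and Yind1: "inj_on (\<lambda>j. br (Y 1) (Y j)) {2..q}"
    and Yind2: "independent ((\<lambda>j. br (Y 1) (Y j)) ` {2..q})"
begin

lemma lin1: "linear (br x)" using lie by (simp add: lie_algebra_def)
lemma lin2: "linear (\<lambda>x. br x y)" using lie by (simp add: lie_algebra_def)
lemma br_self[simp]: "br x x = 0" using lie by (simp add: lie_algebra_def)

lemma br_scale_r: "br x (c *\<^sub>R y) = c *\<^sub>R br x y" using linear_scale[OF lin1] .
lemma br_scale_l: "br (c *\<^sub>R x) y = c *\<^sub>R br x y" using linear_scale[OF lin2, of c x] by simp
lemma br_add_r: "br x (y + z) = br x y + br x z" using linear_add[OF lin1] .
lemma br_add_l: "br (x + y) z = br x z + br y z" using linear_add[OF lin2, of x y] by simp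
lemma br_diff_r: "br x (y - z) = br x y - br x z" using linear_diff[OF lin1] .
lemma br_diff_l: "br (x - y) z = br x z - br y z" using linear_diff[OF lin2, of x y] by simp
lemma br_0_r[simp]: "br x 0 = 0" using linear_0[OF lin1] .
lemma br_0_l[simp]: "br 0 x = 0" using linear_0[OF lin2] by simp
lemma br_anti: "br y x = - br x y"
proof -
  have "br x y + br y x = br (x+y) (x+y)"
    using br_add_l[of x y "x+y"] br_add_r[of x x y] br_add_r[of y x y] by simp
  also have "\<dots> = 0" by (rule br_self)
  finally have "br x y + br y x = 0" .
  thus ?thesis by (metis add_eq_0_iff)
qed

lemma center_sub: "subspace (center br)"
  using zc subspace_span unfolding derived_def by metis
lemma br_center: "br x y \<in> center br"
  using zc unfolding derived_def by (metis (mono_tags, lifting) mem_Collect_eq span_base)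
lemma cen_l: "z \<in> center br \<Longrightarrow> br z x = 0" by (simp add: center_def)
lemma cen_r: "z \<in> center br \<Longrightarrow> br x z = 0" using br_anti[of z x] by (simp add: center_def)
lemma br_decomp: "z \<in> center br \<Longrightarrow> z' \<in> center br \<Longrightarrow> br (v + z) (w + z') = br v w"
  by (simp add: br_add_l br_add_r cen_l cen_r)
lemma decomp: "\<exists>v z. v \<in> V \<and> z \<in> center br \<and> x = v + z"
proof -
  have "x \<in> {v + z | v z. v \<in> V \<and> z \<in> center br}" using dsum2 by simp
  thus ?thesis by blast
qed

lemma Vspan: "span (Y ` {1..q}) = V" using Ybasis by (simp add: is_basis_of_def)
lemma Y1V: "Y 1 \<in> V" using Vspan q2 by (metis atLeastAtMost_iff image_eqI one_le_numeral order_trans span_base le_refl)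
lemma Y1nz: "Y 1 \<noteq> 0"
proof
  assume "Y 1 = 0"
  hence "0 \<in> Y ` {1..q}" using q2 by force
  thus False using Ybasis dependent_zero by (auto simp: is_basis_of_def)
qed

lemma indep_coeffs:
  assumes "(\<Sum>i\<in>{2..q}. c i *\<^sub>R br (Y 1) (Y i)) = 0" "i \<in> {2..q}"
  shows "c i = 0"
proof -
  let ?g = "\<lambda>j. br (Y 1) (Y j)"
  define u where "u v = c (inv_into {2..q} ?g v)" for v
  have "(\<Sum>v\<in>?g ` {2..q}. u v *\<^sub>R v) = (\<Sum>j\<in>{2..q}. u (?g j) *\<^sub>R ?g j)"
    using sum.reindex[OF Yind1] by simp
  also have "\<dots> = (\<Sum>j\<in>{2..q}. c j *\<^sub>R ?g j)"
  proof (rule sum.cong)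
    fix j assume j: "j \<in> {2..q}"
    have "inv_into {2..q} ?g (?g j) = j" by (rule inv_into_f_f[OF Yind1 j])
    thus "u (?g j) *\<^sub>R ?g j = c j *\<^sub>R ?g j" unfolding u_def by simp
  qed simp
  finally have "(\<Sum>v\<in>?g ` {2..q}. u v *\<^sub>R v) = 0" using assms(1) by simp
  hence "\<forall>v\<in>?g ` {2..q}. u v = 0" using Yind2 dependent_finite[of "?g ` {2..q}"] by auto
  hence "u (?g i) = 0" using assms(2) by blast
  moreover have "inv_into {2..q} ?g (?g i) = i" by (rule inv_into_f_f[OF Yind1 assms(2)])
  ultimately show ?thesis unfolding u_def by simp
qed

lemma centralizer:
  assumes "w \<in> V" "br (Y 1) w = 0"
  shows "\<exists>c. w = c *\<^sub>R Y 1"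
proof -
  have injY: "inj_on Y {1..q}" using Ybasis by (simp add: is_basis_of_def)
  obtain u where u: "w = (\<Sum>v\<in>Y ` {1..q}. u v *\<^sub>R v)"
    using assms(1) Vspan span_finite[of "Y ` {1..q}"] by auto
  have w: "w = (\<Sum>i\<in>{1..q}. u (Y i) *\<^sub>R Y i)" using u sum.reindex[OF injY] by simp
  have ins: "{1..q} = insert 1 {2..q}" using q2 by auto
  have w2: "w = u (Y 1) *\<^sub>R Y 1 + (\<Sum>i\<in>{2..q}. u (Y i) *\<^sub>R Y i)"
    using w unfolding ins by simp
  have "br (Y 1) w = (\<Sum>i\<in>{2..q}. u (Y i) *\<^sub>R br (Y 1) (Y i))"
    unfolding w2 by (simp add: br_add_r br_scale_r linear_sum[OF lin1])
  hence "\<forall>i\<in>{2..q}. u (Y i) = 0" using assms(2) indep_coeffs by metis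
  hence "w = u (Y 1) *\<^sub>R Y 1" using w2 by simp
  thus ?thesis by blast
qed

lemma noncentral:
  assumes "v \<in> V" "v \<noteq> 0"
  shows "\<exists>w\<in>V. br v w \<noteq> 0"
proof -
  have "v \<notin> center br" using assms dsum1 by blast
  then obtain x where x: "br v x \<noteq> 0" by (auto simp: center_def)
  obtain w z where "w \<in> V" "z \<in> center br" "x = w + z" using decomp by blast
  thus ?thesis using x by (auto simp: br_add_r cen_r)
qed


lemma core:
  assumes fhom: "lie_ring_hom br f" and fV: "f ` V \<subseteq> V" and X1: "X1 \<in> V"
    and fX1: "f X1 = Y 1" and SV: "S \<subseteq> V" and Sne: "S \<noteq> {}"
    and Snz: "\<forall>w\<in>S. f (br X1 w) \<noteq> 0" and Vsp: "V \<subseteq> span (insert X1 S)"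
  shows "linear f"
proof -
  have fadd: "f (x + y) = f x + f y" for x y using fhom by (simp add: lie_ring_hom_def)
  have fbr: "f (br x y) = br (f x) (f y)" for x y using fhom by (simp add: lie_ring_hom_def)
  interpret fa: additive f using additive_of_hom[OF fhom] .
  have f0: "f 0 = 0" by (rule fa.zero)
  have fVin: "x \<in> V \<Longrightarrow> f x \<in> V" for x using fV by blast
  have cancelY: "c *\<^sub>R Y 1 = d *\<^sub>R Y 1 \<Longrightarrow> c = d" for c d using Y1nz by simp
  have ex: "\<exists>c. f (t *\<^sub>R X1) = c *\<^sub>R Y 1" for t
  proof (rule centralizer)
    show "f (t *\<^sub>R X1) \<in> V" using fVin X1 subV subspace_scale by blast
    have "br (Y 1) (f (t *\<^sub>R X1)) = f (br X1 (t *\<^sub>R X1))" using fbr fX1 by simp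
    also have "\<dots> = 0" by (simp add: br_scale_r f0)
    finally show "br (Y 1) (f (t *\<^sub>R X1)) = 0" .
  qed
  define a where "a t = (SOME c. f (t *\<^sub>R X1) = c *\<^sub>R Y 1)" for t
  have fa: "f (t *\<^sub>R X1) = a t *\<^sub>R Y 1" for t
    unfolding a_def using someI_ex[OF ex[of t]] .
  have a_add: "a (s + t) = a s + a t" for s t
  proof -
    have "a (s+t) *\<^sub>R Y 1 = (a s + a t) *\<^sub>R Y 1"
      using fa[of "s+t"] fa[of s] fa[of t] fadd[of "s *\<^sub>R X1" "t *\<^sub>R X1"]
      by (simp add: scaleR_add_left)
    thus ?thesis by (rule cancelY)
  qed
  obtain w0 where w0: "w0 \<in> S" using Sne by blast
  define e where "e = br (Y 1) (f w0)"
  have e: "e \<noteq> 0" using Snz w0 fbr fX1 unfolding e_def by metis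
  have a_mul: "a (t * s) = a t * a s" for s t
  proof -
    have h1: "br (Y 1) (f (s *\<^sub>R w0)) = a s *\<^sub>R e"
    proof -
      have "br (Y 1) (f (s *\<^sub>R w0)) = f (br X1 (s *\<^sub>R w0))" using fbr fX1 by simp
      also have "\<dots> = f (br (s *\<^sub>R X1) w0)" by (simp add: br_scale_r br_scale_l)
      also have "\<dots> = br (f (s *\<^sub>R X1)) (f w0)" by (rule fbr)
      also have "\<dots> = a s *\<^sub>R e" by (simp add: fa e_def br_scale_l)
      finally show ?thesis .
    qed
    have eq: "f (br (t *\<^sub>R X1) (s *\<^sub>R w0)) = f (br ((t * s) *\<^sub>R X1) w0)"
      by (simp add: br_scale_r br_scale_l mult.commute)
    have "a t *\<^sub>R (a s *\<^sub>R e) = br (a t *\<^sub>R Y 1) (f (s *\<^sub>R w0))" by (simp only: br_scale_l h1)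
    also have "\<dots> = br (f (t *\<^sub>R X1)) (f (s *\<^sub>R w0))" by (simp add: fa)
    also have "\<dots> = f (br (t *\<^sub>R X1) (s *\<^sub>R w0))" by (rule fbr[symmetric])
    also have "\<dots> = f (br ((t * s) *\<^sub>R X1) w0)" by (rule eq)
    also have "\<dots> = br (f ((t * s) *\<^sub>R X1)) (f w0)" by (rule fbr)
    also have "\<dots> = a (t * s) *\<^sub>R e" by (simp add: fa e_def br_scale_l)
    finally have "a t *\<^sub>R (a s *\<^sub>R e) = a (t * s) *\<^sub>R e" .
    hence "(a t * a s) *\<^sub>R e = a (t * s) *\<^sub>R e" by simp
    thus ?thesis using e by simp
  qed
  have "a 1 *\<^sub>R Y 1 = 1 *\<^sub>R Y 1" using fa[of 1] fX1 by simp
  hence a1: "a 1 = 1" by (rule cancelY)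
  have aid: "a t = t" for t using real_hom_id[of a] a_add a_mul a1 by (metis mult.commute)
  define P where "P = {w. \<forall>t. f (t *\<^sub>R w) = t *\<^sub>R f w}"
  have subP: "subspace P"
    unfolding subspace_def P_def
    by (auto simp: f0 fadd scaleR_add_right)
  have X1P: "X1 \<in> P" unfolding P_def using fa aid fX1 by simp
  have SP: "w \<in> P" if wS: "w \<in> S" for w
  proof -
    have wV: "w \<in> V" using wS SV by blast
    have nz: "br (Y 1) (f w) \<noteq> 0" using Snz wS fbr fX1 by metis
    { fix t
      define d where "d = f (t *\<^sub>R w) - t *\<^sub>R f w"
      have dV: "d \<in> V" unfolding d_def
        using fVin wV subV by (meson subspace_diff subspace_scale)
      have k1: "br (Y 1) (f (t *\<^sub>R w)) = f (br X1 (t *\<^sub>R w))" by (simp only: fbr fX1)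
      have k2: "f (br X1 (t *\<^sub>R w)) = f (br (t *\<^sub>R X1) w)" by (simp add: br_scale_r br_scale_l)
      have k3: "f (br (t *\<^sub>R X1) w) = t *\<^sub>R br (Y 1) (f w)"
        using fbr[of "t *\<^sub>R X1" w] by (simp only: fa aid br_scale_l)
      have "br (Y 1) d = br (Y 1) (f (t *\<^sub>R w)) - t *\<^sub>R br (Y 1) (f w)"
        unfolding d_def by (simp only: br_diff_r br_scale_r)
      also have "\<dots> = 0" using k1 k2 k3 by simp
      finally obtain c where c: "d = c *\<^sub>R Y 1" using centralizer[OF dV] by blast
      have ftw: "f (t *\<^sub>R w) = t *\<^sub>R f w + c *\<^sub>R Y 1" using c unfolding d_def by (simp add: algebra_simps)
      have "br (f (t *\<^sub>R w)) (f w) = 0" using fbr[of "t *\<^sub>R w" w] f0 by (simp add: br_scale_l)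
      hence "c *\<^sub>R br (Y 1) (f w) = 0" unfolding ftw by (simp add: br_add_l br_scale_l)
      hence "c = 0" using nz by simp
      hence "f (t *\<^sub>R w) = t *\<^sub>R f w" using ftw by simp }
    thus ?thesis unfolding P_def by blast
  qed
  have VP: "V \<subseteq> P" using Vsp span_minimal[of "insert X1 S" P] subP X1P SP by blast
  have brP: "br x y \<in> P" for x y
  proof -
    obtain vx zx where x: "vx \<in> V" "zx \<in> center br" "x = vx + zx" using decomp by blast
    obtain vy zy where y: "vy \<in> V" "zy \<in> center br" "y = vy + zy" using decomp by blast
    have b: "br x y = br vx vy" using x y br_decomp by simp
    have pv: "f (t *\<^sub>R vx) = t *\<^sub>R f vx" for t using VP x unfolding P_def by blast
    { fix t
      have "f (t *\<^sub>R br vx vy) = f (br (t *\<^sub>R vx) vy)" by (simp add: br_scale_l)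
      also have "\<dots> = br (f (t *\<^sub>R vx)) (f vy)" by (rule fbr)
      also have "\<dots> = t *\<^sub>R f (br vx vy)" by (simp only: pv fbr br_scale_l)
      finally have "f (t *\<^sub>R br vx vy) = t *\<^sub>R f (br vx vy)" . }
    thus ?thesis unfolding b P_def by blast
  qed
  have CP: "center br \<subseteq> P"
    using zc span_minimal[of "{br x y | x y. True}" P] subP brP unfolding derived_def by blast
  have allP: "x \<in> P" for x
  proof -
    obtain v z where "v \<in> V" "z \<in> center br" "x = v + z" using decomp by blast
    thus ?thesis using VP CP subP subspace_add by blast
  qed
  show ?thesis
    by (rule linearI) (use fadd allP in \<open>auto simp: P_def\<close>)
qed


lemma partA:
  assumes aut: "lie_ring_aut br f" and fVV: "f ` V = V"
  shows "lie_alg_aut br f"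
proof -
  have fhom: "lie_ring_hom br f" and bijf: "bij f" using aut by (auto simp: lie_ring_aut_def)
  have fbr: "f (br x y) = br (f x) (f y)" for x y using fhom by (simp add: lie_ring_hom_def)
  interpret fa: additive f using additive_of_hom[OF fhom] .
  have f0: "f 0 = 0" by (rule fa.zero)
  have injf: "inj f" using bijf bij_is_inj by blast
  obtain X1 where X1: "X1 \<in> V" "f X1 = Y 1" using Y1V fVV by (metis imageE)
  have X1nz: "X1 \<noteq> 0" using X1 f0 Y1nz by auto
  define S where "S = {w \<in> V. br X1 w \<noteq> 0}"
  have Snz: "\<forall>w\<in>S. f (br X1 w) \<noteq> 0" unfolding S_def using injf f0 by (metis (mono_tags, lifting) injD mem_Collect_eq)
  obtain w0 where w0: "w0 \<in> S" using noncentral[OF X1(1) X1nz] unfolding S_def by blast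
  have Vsp: "V \<subseteq> span (insert X1 S)"
  proof
    fix w assume wV: "w \<in> V"
    show "w \<in> span (insert X1 S)"
    proof (cases "w \<in> S")
      case True thus ?thesis by (simp add: span_base)
    next
      case False
      hence bw: "br X1 w = 0" using wV unfolding S_def by blast
      have "w + w0 \<in> S" using w0 wV bw subV unfolding S_def by (auto simp: br_add_r subspace_add)
      hence "(w + w0) - w0 \<in> span (insert X1 S)" using w0 by (meson insertCI span_base span_diff)
      thus ?thesis by simp
    qed
  qed
  have "linear f"
    by (rule core[OF fhom _ X1 _ _ Snz Vsp]) (use fVV w0 in \<open>auto simp: S_def\<close>)
  thus ?thesis using aut by (simp add: lie_alg_aut_def lie_alg_hom_def lie_ring_aut_def)
qed

lemma partB:
  assumes fhom: "lie_ring_hom br f" and fV: "f ` V \<subseteq> V"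
    and X: "is_basis_of V X 1 q" and fX1: "f (X 1) = Y 1"
    and nz: "\<forall>j\<in>{2..q}. f (br (X 1) (X j)) \<noteq> 0"
  shows "lie_alg_hom br f"
proof -
  have XV: "span (X ` {1..q}) = V" using X by (simp add: is_basis_of_def)
  have "{1..q} = insert 1 {2..q}" using q2 by auto
  hence ins: "X ` {1..q} = insert (X 1) (X ` {2..q})" by simp
  have X1V: "X 1 \<in> V" using XV ins by (metis insertI1 span_base)
  have SV: "X ` {2..q} \<subseteq> V" using XV ins by (metis insert_subset span_superset)
  have "linear f"
    by (rule core[OF fhom fV X1V fX1 SV]) (use q2 nz XV ins in auto)
  thus ?thesis using fhom by (simp add: lie_alg_hom_def)
qed


lemma partC:
  assumes aut: "lie_ring_aut br g"
  shows "\<exists>\<mu> fbar. central_aut br \<mu> \<and> lie_alg_aut br fbar \<and> g = \<mu> \<circ> fbar"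
proof -
  have ghom: "lie_ring_hom br g" and bijg: "bij g" using aut by (auto simp: lie_ring_aut_def)
  have gbr: "g (br x y) = br (g x) (g y)" for x y using ghom by (simp add: lie_ring_hom_def)
  have gadd: "g (x + y) = g x + g y" for x y using ghom by (simp add: lie_ring_hom_def)
  interpret ga: additive g using additive_of_hom[OF ghom] .
  have g0: "g 0 = 0" by (rule ga.zero)
  have injg: "inj g" using bijg bij_is_inj by blast
  have surjg: "surj g" using bijg bij_is_surj by blast
  have gC: "g z \<in> center br \<longleftrightarrow> z \<in> center br" for z
  proof
    assume gz: "g z \<in> center br"
    { fix y have "g (br z y) = g 0" using gbr cen_l[OF gz] g0 by simp
      hence "br z y = 0" using injg by (meson injD) }
    thus "z \<in> center br" by (simp add: center_def)
  next
    assume z: "z \<in> center br"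
    { fix x obtain y where "x = g y" using surjg by blast
      hence "br (g z) x = 0" using gbr[of z y] cen_l[OF z, of y] g0 by simp }
    thus "g z \<in> center br" by (simp add: center_def)
  qed
  have subC: "subspace (center br)" by (rule center_sub)
  define p where "p x = (SOME v. v \<in> V \<and> x - v \<in> center br)" for x
  have p_prop: "p x \<in> V \<and> x - p x \<in> center br" for x
  proof -
    obtain v z where "v \<in> V" "z \<in> center br" "x = v + z" using decomp by blast
    hence "\<exists>v. v \<in> V \<and> x - v \<in> center br" by (metis add_diff_cancel_left')
    thus ?thesis unfolding p_def by (rule someI_ex)
  qed
  have pV: "p x \<in> V" and pC: "x - p x \<in> center br" for x using p_prop by auto
  have p_uniq: "p x = v" if "v \<in> V" "x - v \<in> center br" for x v
  proof -
    have "p x - v \<in> V" using pV that subV subspace_diff by blast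
    moreover have "p x - v = (x - v) - (x - p x)" by simp
    hence "p x - v \<in> center br" using that pC subC subspace_diff by metis
    ultimately have "p x - v = 0" using dsum1 by blast
    thus ?thesis by simp
  qed
  have p_add: "p (x + y) = p x + p y" for x y
  proof (rule p_uniq)
    show "p x + p y \<in> V" using pV subV subspace_add by blast
    have "x + y - (p x + p y) = (x - p x) + (y - p y)" by simp
    thus "x + y - (p x + p y) \<in> center br" using pC subC subspace_add by metis
  qed
  have p_onV: "v \<in> V \<Longrightarrow> p v = v" for v using p_uniq subC subspace_0 by fastforce
  have p_onC: "z \<in> center br \<Longrightarrow> p z = 0" for z using p_uniq[of 0 z] subV subspace_0 by fastforce
  have br_p: "br x y = br (p x) (p y)" for x y
  proof -
    have "br x y = br (p x + (x - p x)) (p y + (y - p y))" by simp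
    also have "\<dots> = br (p x) (p y)" using br_decomp pC by blast
    finally show ?thesis .
  qed
  define h where "h x = p (g (p x)) + g (x - p x)" for x
  have h_add: "h (x + y) = h x + h y" for x y
  proof -
    have e1: "x + y - p (x + y) = (x - p x) + (y - p y)" using p_add by simp
    have "h (x + y) = p (g (p x)) + p (g (p y)) + (g (x - p x) + g (y - p y))"
    proof -
      have "h (x + y) = p (g (p (x + y))) + g ((x - p x) + (y - p y))" unfolding h_def e1 ..
      thus ?thesis by (simp only: p_add gadd)
    qed
    thus ?thesis unfolding h_def by (simp add: algebra_simps)
  qed
  have h_br_eq: "h (br x y) = g (br x y)" for x y
  proof -
    have "p (br x y) = 0" using p_onC br_center by blast
    moreover have "p 0 = 0" using p_onC subC subspace_0 by blast
    ultimately show ?thesis unfolding h_def using g0 by simp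
  qed
  have h_br: "h (br x y) = br (h x) (h y)" for x y
  proof -
    have "br (h x) (h y) = br (p (g (p x))) (p (g (p y)))"
      unfolding h_def using br_decomp gC pC by blast
    also have "\<dots> = br (g (p x)) (g (p y))" using br_p by metis
    also have "\<dots> = g (br (p x) (p y))" using gbr by simp
    also have "\<dots> = g (br x y)" using br_p by metis
    finally show ?thesis using h_br_eq by simp
  qed
  have hhom: "lie_ring_hom br h" unfolding lie_ring_hom_def using h_add h_br by blast
  interpret ha: additive h using additive_of_hom[OF hhom] .
  have VC0: "a \<in> V \<Longrightarrow> b \<in> center br \<Longrightarrow> a + b = 0 \<Longrightarrow> a = 0 \<and> b = 0" for a b
  proof -
    assume a: "a \<in> V" and b: "b \<in> center br" and ab: "a + b = 0"
    hence "a = - b" by (simp add: eq_neg_iff_add_eq_0)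
    hence "a \<in> center br" using b subC subspace_neg by metis
    hence "a = 0" using a dsum1 by blast
    thus ?thesis using ab by simp
  qed
  have h_inj: "inj h"
  proof (rule injI)
    fix x y assume hxy: "h x = h y"
    define d where "d = x - y"
    have "h d = 0" unfolding d_def using hxy ha.diff by simp
    hence "p (g (p d)) + g (d - p d) = 0" by (simp add: h_def)
    moreover have "g (d - p d) \<in> center br" using gC pC by blast
    ultimately have z1: "p (g (p d)) = 0" and z2: "g (d - p d) = 0" using VC0 pV by blast+
    have "d - p d = 0" using z2 injg g0 by (metis injD)
    moreover have "g (p d) \<in> center br" using pC[of "g (p d)"] z1 by simp
    hence "p d \<in> center br" using gC by blast
    hence "p d = 0" using pV dsum1 by blast
    ultimately have "d = 0" by simp
    thus "x = y" by (simp add: d_def)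
  qed
  have h_surj: "surj h"
  proof -
    { fix y
      define u where "u = y - p y"
      define z where "z = inv g u"
      have gz: "g z = u" unfolding z_def using surjg by (simp add: surj_f_inv_f)
      have zC: "z \<in> center br" using gC gz pC u_def by metis
      define x0 where "x0 = inv g (p y)"
      have gx0: "g x0 = p y" unfolding x0_def using surjg by (simp add: surj_f_inv_f)
      define v where "v = p x0"
      have vV: "v \<in> V" using pV v_def by simp
      have gv: "g v = p y - g (x0 - v)" using gx0 ga.diff[of x0 v] by simp
      have "p (g v) = p y"
      proof (rule p_uniq)
        show "p y \<in> V" by (rule pV)
        have "g v - p y = - g (x0 - v)" using gv by simp
        moreover have "g (x0 - v) \<in> center br" using gC pC v_def by blast
        ultimately show "g v - p y \<in> center br" using subC subspace_neg by metis
      qed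
      moreover have "p (v + z) = v" using p_uniq[of v "v + z"] vV zC by simp
      ultimately have "h (v + z) = y" unfolding h_def using gz u_def by simp
      hence "y \<in> range h" by (metis rangeI) }
    thus ?thesis by blast
  qed
  have bijh: "bij h" using h_inj h_surj by (simp add: bij_def)
  have hV: "h ` V = V"
  proof
    show "h ` V \<subseteq> V"
    proof
      fix y assume "y \<in> h ` V"
      then obtain v where "v \<in> V" "y = h v" by blast
      thus "y \<in> V" using p_onV pV g0 by (simp add: h_def)
    qed
  next
    show "V \<subseteq> h ` V"
    proof
      fix w assume wV: "w \<in> V"
      obtain x where hx: "h x = w" using h_surj by (metis surjD)
      have "p (g (p x)) + g (x - p x) = w" using hx by (simp add: h_def)
      hence "(p (g (p x)) - w) + g (x - p x) = 0" by (simp add: algebra_simps)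
      moreover have "p (g (p x)) - w \<in> V" using pV wV subV subspace_diff by blast
      moreover have "g (x - p x) \<in> center br" using gC pC by blast
      ultimately have "g (x - p x) = 0" using VC0 by blast
      hence "x - p x = 0" using injg g0 by (metis injD)
      hence "x \<in> V" using pV by (metis eq_iff_diff_eq_0)
      thus "w \<in> h ` V" using hx by blast
    qed
  qed
  have haut: "lie_ring_aut br h" using hhom bijh by (simp add: lie_ring_aut_def)
  have halg: "lie_alg_aut br h" using partA[OF haut hV] .
  define hi where "hi = inv h"
  have h_hi: "h (hi x) = x" for x unfolding hi_def using h_surj by (simp add: surj_f_inv_f)
  have hi_h: "hi (h x) = x" for x unfolding hi_def using h_inj by (simp add: inv_f_f)
  have hi_hom: "lie_ring_hom br hi"
    unfolding lie_ring_hom_def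
  proof (intro conjI allI)
    fix x y
    show "hi (x + y) = hi x + hi y" using h_inj h_hi h_add by (metis injD)
    show "hi (br x y) = br (hi x) (hi y)" using h_inj h_hi h_br by (metis injD)
  qed
  define \<mu> where "\<mu> = g \<circ> hi"
  have bijhi: "bij hi" unfolding hi_def using bijh by (rule bij_imp_bij_inv)
  have mu_aut: "lie_ring_aut br \<mu>"
    unfolding lie_ring_aut_def lie_ring_hom_def \<mu>_def
    using bij_comp[OF bijhi bijg] gadd gbr hi_hom by (simp add: lie_ring_hom_def)
  have mu_c: "\<mu> x - x \<in> center br" for x
  proof -
    define y where "y = hi x"
    have "\<mu> x - x = g y - h y" unfolding \<mu>_def y_def using h_hi by simp
    also have "\<dots> = g (p y) - p (g (p y))"
    proof -
      have "g y = g (p y) + g (y - p y)" using gadd[of "p y" "y - p y"] by simp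
      thus ?thesis by (simp add: h_def)
    qed
    finally show ?thesis using pC by simp
  qed
  have "g = \<mu> \<circ> h" unfolding \<mu>_def using hi_h by (simp add: fun_eq_iff)
  moreover have "central_aut br \<mu>" using mu_aut mu_c by (simp add: central_aut_def)
  ultimately show ?thesis using halg by blast
qed

end

theorem lemma3p1:
  fixes br :: "'a::real_vector \<Rightarrow> 'a \<Rightarrow> 'a"
    and V :: "'a set" and q :: nat and Y :: "nat \<Rightarrow> 'a" and f :: "'a \<Rightarrow> 'a"
  assumes lie: "lie_algebra br"
    and nil: "two_step_nilpotent br"
    and zc: "derived br = center br"
    and subV: "subspace V"
    and dsum1: "V \<inter> center br = {0}"
    and dsum2: "{v + z | v z. v \<in> V \<and> z \<in> center br} = UNIV"
    and q2: "q \<ge> 2"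
    and Ybasis: "is_basis_of V Y 1 q"
    and Yind: "inj_on (\<lambda>j. br (Y 1) (Y j)) {2..q}"
              "independent ((\<lambda>j. br (Y 1) (Y j)) ` {2..q})"
    and fhom: "lie_ring_hom br f"
    and fV: "f ` V \<subseteq> V"
  shows "(lie_ring_aut br f \<and> f ` V = V \<longrightarrow> lie_alg_aut br f)
    \<and> ((\<exists>X. is_basis_of V X 1 q \<and> f (X 1) = Y 1 \<and>
            (\<forall>j\<in>{2..q}. f (br (X 1) (X j)) \<noteq> 0)) \<longrightarrow> lie_alg_hom br f)
    \<and> (\<forall>g. lie_ring_aut br g \<longrightarrow>
          (\<exists>\<mu> fbar. central_aut br \<mu> \<and> lie_alg_aut br fbar \<and> g = \<mu> \<circ> fbar))"
proof -
  interpret nsetup br V q Y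
    using lie zc subV dsum1 dsum2 q2 Ybasis Yind by unfold_locales auto
  show ?thesis
  proof (intro conjI impI allI)
    assume "lie_ring_aut br f \<and> f ` V = V"
    thus "lie_alg_aut br f" using partA by blast
  next
    assume "\<exists>X. is_basis_of V X 1 q \<and> f (X 1) = Y 1 \<and>
            (\<forall>j\<in>{2..q}. f (br (X 1) (X j)) \<noteq> 0)"
    then obtain X where "is_basis_of V X 1 q" "f (X 1) = Y 1"
      "\<forall>j\<in>{2..q}. f (br (X 1) (X j)) \<noteq> 0" by blast
    thus "lie_alg_hom br f" using partB[OF fhom fV] by blast
  next
    fix g assume "lie_ring_aut br g"
    thus "\<exists>\<mu> fbar. central_aut br \<mu> \<and> lie_alg_aut br fbar \<and> g = \<mu> \<circ> fbar" by (rule partC)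
  qed
qed

end
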